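(* Let $D$ denote the set of variable network games $(v,\rho)\in\mathbb V^N\times\mathbb P^N$ such that $v$ is component additive. Then: (i) the Expected Myerson Value $\Psi^m$ is an allocation rule on the class of variable network games which, on $D$, satisfies component balance and the balanced contributions property; and (ii) if $\Psi\colon\mathbb V^N\times\mathbb P^N\to\mathbb R^N$ is any allocation rule on the class of variable network games satisfying component balance and the balanced contributions property for all $(v,\rho)\in D$, then $\Psi(v,\rho)=\Psi^m(v,\rho)$ for all $(v,\rho)\in D$. That is, $\Psi^m$ is the unique allocation rule on the class of component additive variable network games that satisfies component balance and the balanced contributions property.
   Context: $N=\{1,\dots,n\}$ is a finite player set. A link is an unordered pair $ij=\{i,j\}$ of distinct players; $g_N$ is the set of all links; a network is any $g\subseteq g_N$; $\mathbb G^N$ is the set of all networks. For $g\in\mathbb G^N$: $N_i(g)=\{j\ne i: ij\in g\}$, $L_i(g)=\{ij\in g\}$, $N(g)=\bigcup_i N_i(g)$, and $N_0(g)=N\setminus N(g)$ (isolated players). For $S\subseteq N$, $g|S=\{ij\in g: i,j\in S\}$. A component of $g$ is a nonempty subnetwork $h\subseteq g$ that is connected (any two players of $N(h)$ are joined by a path in $h$) and maximal (if $i\in N(h)$ and $ij\in g$ then $ij\in h$); $C(g)$ is the set of components of $g$. A network formation probability distribution is a map $\rho\colon\mathbb G^N\to[0,1]$ with $\sum_g\rho(g)=1$; $\mathbb P^N$ is the set of these. $\mathbb G(\rho)=\{g:\rho(g)>0\}$, and the extent is $g(\rho)=\bigcup_{g\in\mathbb G(\rho)}g$. For a network $g$,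 the restriction $\rho_g\in\mathbb P^N$ is $\rho_g(h)=\sum_{h'\subseteq g_N\setminus g}\rho(h\cup h')$ if $h\subseteq g$ and $\rho_g(h)=0$ otherwise. For a player $i$, $\rho^{-i}=\rho_{g_N\setminus L_i(g_N)}$. A network game is $v\colon\mathbb G^N\to\mathbb R$ with $v(\varnothing)=0$; $\mathbb V^N$ is the set of these. $v$ is component additive if $v(g)=\sum_{h\in C(g)}v(h)$ for all $g$. A variable network game is a pair $(v,\rho)\in\mathbb V^N\times\mathbb P^N$. An allocation rule on the class of variable network games is a map $\Psi\colon\mathbb V^N\times\mathbb P^N\to\mathbb R^N$ with $\Psi_i(v,\rho)=0$ for every $i\in N_0(g(\rho))$. It is component balanced (on $(v,\rho)$ with $v$ component additive) if for every $h\in C(g(\rho))$: $\sum_{i\in N(h)}\Psi_i(v,\rho)=\sum_{g\in\mathbb G(\rho)}\rho(g)\,v(g\cap h)$. It satisfies the balanced contributions property if for all players $i\ne j$: $\Psi_i(v,\rho)-\Psi_i(v,\rho^{-j})=\Psi_j(v,\rho)-\Psi_j(v,\rho^{-i})$. The Myerson Value for network games is $Y^m_i(v,g)=\sum_{S\subseteq N\setminus\{i\}}\frac{\#S!\,(n-\#S-1)!}{n!}\,[v(g|(S\cup\{i\}))-v(g|S)]$. The Expected Myerson Value is $\Psi^m(v,\rho)=\sum_{g\in\mathbb G^N}\rho(g)\,Y^m(v,g)$. *)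

theory Defs
  imports Complex_Main
begin

(* Players: the elements of a finite type 'a (N = UNIV).
   Links: unordered pairs {i,j} of distinct players.
   Networks: sets of links. *)

definition gN :: "'a set set" where
  "gN = {{i, j} | i j. i \<noteq> j}"

definition nbrs :: "'a set set \<Rightarrow> 'a \<Rightarrow> 'a set" where
  "nbrs g i = {j. j \<noteq> i \<and> {i, j} \<in> g}"

definition links_of :: "'a set set \<Rightarrow> 'a \<Rightarrow> 'a set set" where
  "links_of g i = {l \<in> g. \<exists>j. l = {i, j} \<and> j \<noteq> i}"

definition players :: "'a set set \<Rightarrow> 'a set" where
  "players g = (\<Union>i. nbrs g i)"

definition isolated :: "'a set set \<Rightarrow> 'a set" where
  "isolated g = UNIV - players g"

definition restr :: "'a set set \<Rightarrow> 'a set \<Rightarrow> 'a set set" where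
  "restr g S = {l \<in> g. \<exists>i j. l = {i, j} \<and> i \<in> S \<and> j \<in> S}"

definition adj :: "'a set set \<Rightarrow> ('a \<times> 'a) set" where
  "adj h = {(i, j). i \<noteq> j \<and> {i, j} \<in> h}"

definition net_connected :: "'a set set \<Rightarrow> bool" where
  "net_connected h = (\<forall>i\<in>players h. \<forall>j\<in>players h. (i, j) \<in> (adj h)\<^sup>*)"

definition is_component :: "'a set set \<Rightarrow> 'a set set \<Rightarrow> bool" where
  "is_component h g = (h \<noteq> {} \<and> h \<subseteq> g \<and> net_connected h \<and>
     (\<forall>i\<in>players h. \<forall>j. j \<noteq> i \<and> {i, j} \<in> g \<longrightarrow> {i, j} \<in> h))"

definition comps :: "'a set set \<Rightarrow> 'a set set set" where
  "comps g = {h. is_component h g}"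

definition is_game :: "('a set set \<Rightarrow> real) \<Rightarrow> bool" where
  "is_game v = (v {} = 0)"

definition comp_additive :: "('a set set \<Rightarrow> real) \<Rightarrow> bool" where
  "comp_additive v = (\<forall>g. g \<subseteq> gN \<longrightarrow> v g = (\<Sum>h\<in>comps g. v h))"

definition is_prob :: "('a set set \<Rightarrow> real) \<Rightarrow> bool" where
  "is_prob \<rho> = ((\<forall>g. 0 \<le> \<rho> g \<and> \<rho> g \<le> 1) \<and> (\<forall>g. \<not> g \<subseteq> gN \<longrightarrow> \<rho> g = 0)
                \<and> (\<Sum>g\<in>Pow gN. \<rho> g) = 1)"

definition supp :: "('a set set \<Rightarrow> real) \<Rightarrow> 'a set set set" where
  "supp \<rho> = {g. \<rho> g > 0}"

definition extent :: "('a set set \<Rightarrow> real) \<Rightarrow> 'a set set" where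
  "extent \<rho> = \<Union>(supp \<rho>)"

definition restr_prob :: "('a set set \<Rightarrow> real) \<Rightarrow> 'a set set \<Rightarrow> ('a set set \<Rightarrow> real)" where
  "restr_prob \<rho> g h = (if h \<subseteq> g then (\<Sum>h'\<in>Pow (gN - g). \<rho> (h \<union> h')) else 0)"

definition minus_player :: "('a set set \<Rightarrow> real) \<Rightarrow> 'a \<Rightarrow> ('a set set \<Rightarrow> real)" where
  "minus_player \<rho> i = restr_prob \<rho> (gN - links_of gN i)"

definition myerson :: "('a::finite set set \<Rightarrow> real) \<Rightarrow> 'a set set \<Rightarrow> 'a \<Rightarrow> real" where
  "myerson v g i = (\<Sum>S\<in>Pow (UNIV - {i}).
      (fact (card S) * fact (card (UNIV :: 'a set) - card S - 1) / fact (card (UNIV :: 'a set))) *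
      (v (restr g (S \<union> {i})) - v (restr g S)))"

definition EMV :: "('a::finite set set \<Rightarrow> real) \<Rightarrow> ('a set set \<Rightarrow> real) \<Rightarrow> 'a \<Rightarrow> real" where
  "EMV v \<rho> i = (\<Sum>g\<in>Pow gN. \<rho> g * myerson v g i)"

type_synonym 'a alloc = "('a set set \<Rightarrow> real) \<Rightarrow> ('a set set \<Rightarrow> real) \<Rightarrow> 'a \<Rightarrow> real"

definition alloc_rule :: "'a alloc \<Rightarrow> bool" where
  "alloc_rule \<Psi> = (\<forall>v \<rho>. is_game v \<and> is_prob \<rho> \<longrightarrow>
      (\<forall>i\<in>isolated (extent \<rho>). \<Psi> v \<rho> i = 0))"

definition comp_balanced :: "'a alloc \<Rightarrow> ('a set set \<Rightarrow> real) \<Rightarrow> ('a set set \<Rightarrow> real) \<Rightarrow> bool" where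
  "comp_balanced \<Psi> v \<rho> = (\<forall>h\<in>comps (extent \<rho>).
      (\<Sum>i\<in>players h. \<Psi> v \<rho> i) = (\<Sum>g\<in>supp \<rho>. \<rho> g * v (g \<inter> h)))"

definition bal_contrib :: "'a alloc \<Rightarrow> ('a set set \<Rightarrow> real) \<Rightarrow> ('a set set \<Rightarrow> real) \<Rightarrow> bool" where
  "bal_contrib \<Psi> v \<rho> = (\<forall>i j. i \<noteq> j \<longrightarrow>
      \<Psi> v \<rho> i - \<Psi> v (minus_player \<rho> j) i = \<Psi> v \<rho> j - \<Psi> v (minus_player \<rho> i) j)"

definition domD :: "(('a set set \<Rightarrow> real) \<times> ('a set set \<Rightarrow> real)) set" where
  "domD = {(v, \<rho>). is_game v \<and> is_prob \<rho> \<and> comp_additive v}"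

end

theory Submission imports Defs begin

lemma players_iff: "x \<in> players g \<longleftrightarrow> (\<exists>y. y \<noteq> x \<and> {x, y} \<in> g)"
  unfolding players_def nbrs_def by (auto simp: insert_commute)

lemma players_I: "x \<noteq> y \<Longrightarrow> {x, y} \<in> g \<Longrightarrow> x \<in> players g"
  unfolding players_def nbrs_def by (auto simp: insert_commute)
lemma players_I2: "x \<noteq> y \<Longrightarrow> {y, x} \<in> g \<Longrightarrow> x \<in> players g"
  unfolding players_def nbrs_def by auto

lemma gN_iff: "l \<in> gN \<longleftrightarrow> (\<exists>a b. a \<noteq> b \<and> l = {a, b})"
  unfolding gN_def by auto

lemma gN_E: assumes "l \<in> gN" obtains a b where "a \<noteq> b" "l = {a,b}"
  using assms unfolding gN_def by blast
lemma dbl_ne: "{a,b} = {x,y} \<Longrightarrow> x \<noteq> y \<Longrightarrow> a \<noteq> b"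
  by auto

lemma finite_gN: "finite (gN :: 'a::finite set set)"
  by (rule finite_subset[of _ "Pow UNIV"]) auto

lemma players_mono: "g \<subseteq> h \<Longrightarrow> players g \<subseteq> players h"
  unfolding players_def nbrs_def by blast

lemma link_touch:
  assumes "l \<in> g" "g \<subseteq> gN" "x \<in> l"
  shows "x \<in> players g"
proof -
  obtain a b where ab: "a \<noteq> b" "l = {a,b}" using assms gN_E by blast
  show ?thesis
  proof (cases "x = a")
    case True
    then have "b \<noteq> x \<and> {x,b} \<in> g" using ab assms by simp
    then show ?thesis unfolding players_iff by blast
  next
    case False
    then have "x = b" "l = {b,a}" using ab assms by auto
    then have "a \<noteq> x \<and> {x,a} \<in> g" using ab assms by simp
    then show ?thesis unfolding players_iff by blast
  qed
qed

lemma restr_subset: "restr g S \<subseteq> g" unfolding restr_def by auto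

lemma restr_UNIV: "g \<subseteq> gN \<Longrightarrow> restr g UNIV = g"
proof
  assume "g \<subseteq> gN"
  show "restr g UNIV \<subseteq> g" by (rule restr_subset)
  show "g \<subseteq> restr g UNIV"
  proof
    fix l assume "l \<in> g"
    then obtain a b where "l = {a,b}" using \<open>g \<subseteq> gN\<close> gN_E by blast
    then show "l \<in> restr g UNIV" using \<open>l \<in> g\<close> unfolding restr_def by blast
  qed
qed

lemma restr_empty: "g \<subseteq> gN \<Longrightarrow> restr g {} = {}"
  unfolding restr_def by auto

lemma restr_null:
  assumes "g \<subseteq> gN" "i \<notin> players g"
  shows "restr g (S \<union> {i}) = restr g S"
proof -
  have "l \<in> g \<Longrightarrow> i \<notin> l" for l using link_touch[of l g i] assms by auto
  then show ?thesis unfolding restr_def by auto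
qed

lemma restr_minus_links:
  assumes "f \<subseteq> gN"
  shows "restr (f \<inter> (gN - links_of gN j)) S = restr f (S - {j})"
proof
  show "restr (f \<inter> (gN - links_of gN j)) S \<subseteq> restr f (S - {j})"
  proof
    fix l assume l: "l \<in> restr (f \<inter> (gN - links_of gN j)) S"
    then obtain a b where ab: "l = {a,b}" "a \<in> S" "b \<in> S" "l \<in> f" "l \<notin> links_of gN j"
      unfolding restr_def by blast
    have lg: "l \<in> gN" using ab(4) assms by blast
    then obtain x y where "x \<noteq> y" "l = {x,y}" by (rule gN_E)
    then have "a \<noteq> b" using ab(1) dbl_ne by metis
    have "a \<noteq> j"
    proof
      assume "a = j"
      then have "l \<in> links_of gN j" using ab(1) lg \<open>a \<noteq> b\<close> by (auto simp: links_of_def)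
      then show False using ab(5) by simp
    qed
    moreover have "b \<noteq> j"
    proof
      assume "b = j"
      then have "l = {j, a}" using ab(1) by auto
      then have "l \<in> links_of gN j" using lg \<open>a \<noteq> b\<close> \<open>b = j\<close> by (auto simp: links_of_def)
      then show False using ab(5) by simp
    qed
    ultimately show "l \<in> restr f (S - {j})" using ab unfolding restr_def by blast
  qed
next
  show "restr f (S - {j}) \<subseteq> restr (f \<inter> (gN - links_of gN j)) S"
  proof
    fix l assume l: "l \<in> restr f (S - {j})"
    then obtain a b where ab: "l = {a,b}" "a \<in> S" "b \<in> S" "l \<in> f" "a \<noteq> j" "b \<noteq> j"
      unfolding restr_def by blast
    have "l \<notin> links_of gN j"
    proof
      assume "l \<in> links_of gN j"
      then obtain k where "l = {j,k}" unfolding links_of_def by blast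
      then have "j \<in> l" by blast
      then show False using ab by blast
    qed
    then show "l \<in> restr (f \<inter> (gN - links_of gN j)) S" using ab assms unfolding restr_def by blast
  qed
qed


lemma comps_sub: "c \<in> comps g \<Longrightarrow> c \<subseteq> g"
  unfolding comps_def is_component_def by blast

lemma finite_comps: "g \<subseteq> gN \<Longrightarrow> finite (comps (g :: 'a::finite set set))"
proof -
  assume "g \<subseteq> gN"
  then have "finite g" using finite_gN finite_subset by blast
  moreover have "comps g \<subseteq> Pow g" using comps_sub by blast
  ultimately show ?thesis using finite_subset by blast
qed

lemma comp_in_union:
  assumes "players A \<inter> players B = {}" "c \<in> comps A"
  shows "c \<in> comps (A \<union> B)"
proof -
  have c: "c \<noteq> {}" "c \<subseteq> A" "net_connected c"
    "\<forall>i\<in>players c. \<forall>j. j \<noteq> i \<and> {i, j} \<in> A \<longrightarrow> {i, j} \<in> c"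
    using assms(2) unfolding comps_def is_component_def by auto
  have "\<forall>i\<in>players c. \<forall>j. j \<noteq> i \<and> {i, j} \<in> A \<union> B \<longrightarrow> {i, j} \<in> c"
  proof (intro ballI allI impI)
    fix i j assume i: "i \<in> players c" and ij: "j \<noteq> i \<and> {i, j} \<in> A \<union> B"
    show "{i, j} \<in> c"
    proof (cases "{i,j} \<in> A")
      case True then show ?thesis using c(4) i ij by blast
    next
      case False
      then have "{i,j} \<in> B" using ij by blast
      then have "i \<in> players B" using ij players_I by metis
      moreover have "i \<in> players A" using i players_mono[OF c(2)] by blast
      ultimately show ?thesis using assms(1) by blast
    qed
  qed
  then show ?thesis using c unfolding comps_def is_component_def by blast
qed

lemma comp_of_union:
  assumes "A \<subseteq> gN" "B \<subseteq> gN" "players A \<inter> players B = {}" "c \<in> comps (A \<union> B)"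
    "c \<inter> A \<noteq> {}"
  shows "c \<in> comps A"
proof -
  have c: "c \<noteq> {}" "c \<subseteq> A \<union> B" "net_connected c"
    "\<forall>i\<in>players c. \<forall>j. j \<noteq> i \<and> {i, j} \<in> A \<union> B \<longrightarrow> {i, j} \<in> c"
    using assms(4) unfolding comps_def is_component_def by auto
  have cg: "c \<subseteq> gN" using c(2) assms(1,2) by blast
  obtain l where l: "l \<in> c" "l \<in> A" using assms(5) by blast
  then obtain a b where ab: "a \<noteq> b" "l = {a,b}" using assms(1) gN_E by blast
  have aA: "a \<in> players A" using link_touch[of l A a] l ab assms(1) by blast
  have ac: "a \<in> players c" using link_touch[of l c a] l ab cg by blast
  have reach: "x \<in> players A" if "(a, x) \<in> (adj c)\<^sup>*" for x
    using that
  proof (induction rule: rtrancl_induct)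
    case base then show ?case using aA .
  next
    case (step y z)
    then have yz: "y \<noteq> z" "{y,z} \<in> c" unfolding adj_def by auto
    have "{y,z} \<notin> B"
    proof
      assume "{y,z} \<in> B"
      then have "y \<in> players B" using yz players_I by metis
      then show False using step(3) assms(3) by blast
    qed
    then have "{y,z} \<in> A" using yz c(2) by blast
    then show ?case using yz players_I2 by metis
  qed
  have pcA: "players c \<subseteq> players A"
  proof
    fix x assume "x \<in> players c"
    then have "(a, x) \<in> (adj c)\<^sup>*" using c(3) ac unfolding net_connected_def by blast
    then show "x \<in> players A" using reach by blast
  qed
  have "c \<subseteq> A"
  proof
    fix l' assume l': "l' \<in> c"
    then obtain p q where pq: "p \<noteq> q" "l' = {p,q}" using cg gN_E by blast
    have "p \<in> players c" using link_touch[of l' c p] l' pq cg by blast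
    then have pA: "p \<in> players A" using pcA by blast
    show "l' \<in> A"
    proof (rule ccontr)
      assume "l' \<notin> A"
      then have "l' \<in> B" using l' c(2) by blast
      then have "p \<in> players B" using link_touch[of l' B p] pq assms(2) by blast
      then show False using pA assms(3) by blast
    qed
  qed
  moreover have "\<forall>i\<in>players c. \<forall>j. j \<noteq> i \<and> {i, j} \<in> A \<longrightarrow> {i, j} \<in> c"
    using c(4) by blast
  ultimately show ?thesis using c unfolding comps_def is_component_def by blast
qed

lemma v_union:
  fixes A B :: "'a::finite set set"
  assumes v: "comp_additive v" and AB: "A \<subseteq> gN" "B \<subseteq> gN" "players A \<inter> players B = {}"
  shows "v (A \<union> B) = v A + v B"
proof -
  have pd: "players B \<inter> players A = {}" using AB(3) by blast
  have "comps (A \<union> B) = comps A \<union> comps B"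
  proof
    show "comps (A \<union> B) \<subseteq> comps A \<union> comps B"
    proof
      fix c assume c: "c \<in> comps (A \<union> B)"
      then have "c \<noteq> {}" "c \<subseteq> A \<union> B" unfolding comps_def is_component_def by auto
      then have "c \<inter> A \<noteq> {} \<or> c \<inter> B \<noteq> {}" by blast
      moreover have "c \<in> comps (B \<union> A)" using c by (simp add: Un_commute)
      ultimately show "c \<in> comps A \<union> comps B"
        using comp_of_union[OF AB c] comp_of_union[OF AB(2) AB(1) pd] by blast
    qed
  next
    show "comps A \<union> comps B \<subseteq> comps (A \<union> B)"
      using comp_in_union[OF AB(3)] comp_in_union[OF pd] by (auto simp: Un_commute)
  qed
  moreover have "comps A \<inter> comps B = {}"
  proof (rule ccontr)
    assume "comps A \<inter> comps B \<noteq> {}"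
    then obtain c where "c \<in> comps A" "c \<in> comps B" by blast
    then have "c \<noteq> {}" "c \<subseteq> A" "c \<subseteq> B" unfolding comps_def is_component_def by auto
    then obtain l where "l \<in> A" "l \<in> B" by blast
    then obtain a b where "a \<noteq> b" "l = {a,b}" using AB(1) gN_E by blast
    then have "a \<in> players A" "a \<in> players B"
      using link_touch[of l A a] link_touch[of l B a] \<open>l \<in> A\<close> \<open>l \<in> B\<close> AB by auto
    then show False using AB(3) by blast
  qed
  moreover have "A \<union> B \<subseteq> gN" using AB by blast
  ultimately show ?thesis
    using v AB finite_comps[of A] finite_comps[of B] unfolding comp_additive_def
    by (simp add: sum.union_disjoint)
qed


definition cf :: "nat \<Rightarrow> nat \<Rightarrow> real" where
  "cf n s = fact s * fact (n - s - 1) / fact n"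

definition sh :: "('a::finite set \<Rightarrow> real) \<Rightarrow> 'a \<Rightarrow> real" where
  "sh u i = (\<Sum>S\<in>Pow (UNIV - {i}). cf (card (UNIV :: 'a set)) (card S) * (u (S \<union> {i}) - u S))"

lemma myerson_sh: "myerson v g i = sh (\<lambda>S. v (restr g S)) i"
  unfolding myerson_def sh_def cf_def by simp

lemma sh_add: "sh (\<lambda>S. u1 S + u2 S) i = sh u1 i + sh u2 i"
  unfolding sh_def by (simp add: sum.distrib[symmetric] algebra_simps)

lemma sh_null: "(\<And>S. u (S \<union> {i}) = u S) \<Longrightarrow> sh u i = 0"
  unfolding sh_def by simp

lemma coef:
  assumes "s \<le> n" "0 < n"
  shows "real s * cf n (s - 1) - real (n - s) * cf n s
        = (if s = n then 1 else 0) - (if s = 0 then 1 else 0)"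
proof -
  have fn: "fact n = real n * fact (n - 1)" using fact_reduce[OF assms(2)] by simp
  have fnz: "(fact n :: real) \<noteq> 0" by simp
  consider "s = 0" | "s = n" | "0 < s" "s < n" using assms by linarith
  then show ?thesis
  proof cases
    case 1
    then show ?thesis using assms fnz unfolding cf_def by (simp add: fn field_simps)
  next
    case 2
    then have "n - (s - 1) - 1 = 0" using assms by simp
    then show ?thesis using 2 assms fnz unfolding cf_def by (simp add: fn field_simps)
  next
    case 3
    have a: "n - (s - 1) - 1 = n - s" using 3 by simp
    have b: "(fact (n - s) :: real) = real (n - s) * fact (n - s - 1)"
      using fact_reduce[of "n - s"] 3 by (metis zero_less_diff)
    have c: "(fact s :: real) = real s * fact (s - 1)" using fact_reduce[of s] 3 by simp
    show ?thesis using 3 unfolding cf_def a by (simp add: b c field_simps)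
  qed
qed

lemma sh_eff: "(\<Sum>i\<in>UNIV. sh u i) = u UNIV - u {}"
proof -
  let ?n = "card (UNIV :: 'a set)"
  let ?c = "cf ?n"
  have n0: "0 < ?n" by (simp add: card_gt_0_iff)
  have P: "\<And>i. Pow (UNIV - {i}) = {S. S \<in> (UNIV :: 'a set set) \<and> i \<notin> S}" by auto
  have B: "(\<Sum>i\<in>UNIV. \<Sum>S\<in>Pow (UNIV - {i}). ?c (card S) * u S)
      = (\<Sum>S\<in>UNIV. real (?n - card S) * ?c (card S) * u S)"
  proof -
    have "(\<Sum>i\<in>UNIV. \<Sum>S\<in>Pow (UNIV - {i}). ?c (card S) * u S)
        = (\<Sum>i\<in>UNIV. \<Sum>S\<in>{S. S \<in> UNIV \<and> i \<notin> S}. ?c (card S) * u S)"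
      by (simp only: P)
    also have "\<dots> = (\<Sum>S\<in>UNIV. \<Sum>i\<in>{i. i \<in> UNIV \<and> i \<notin> S}. ?c (card S) * u S)"
      by (rule sum.swap_restrict) auto
    also have "\<dots> = (\<Sum>S\<in>UNIV. real (?n - card S) * ?c (card S) * u S)"
    proof (rule sum.cong[OF refl])
      fix S :: "'a set"
      have "{i. i \<in> UNIV \<and> i \<notin> S} = UNIV - S" by auto
      moreover have "card (UNIV - S) = ?n - card S" by (simp add: card_Diff_subset)
      ultimately show "(\<Sum>i\<in>{i. i \<in> UNIV \<and> i \<notin> S}. ?c (card S) * u S) = real (?n - card S) * ?c (card S) * u S"
        by simp
    qed
    finally show ?thesis .
  qed
  have A: "(\<Sum>i\<in>UNIV. \<Sum>S\<in>Pow (UNIV - {i}). ?c (card S) * u (S \<union> {i}))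
      = (\<Sum>T\<in>UNIV. real (card T) * ?c (card T - 1) * u T)"
  proof -
    have inner: "(\<Sum>S\<in>Pow (UNIV - {i}). ?c (card S) * u (S \<union> {i}))
        = (\<Sum>T\<in>{T. T \<in> UNIV \<and> i \<in> T}. ?c (card T - 1) * u T)" for i
    proof -
      have inj: "inj_on (\<lambda>S. S \<union> {i}) (Pow (UNIV - {i}))"
        by (rule inj_onI) auto
      have img: "(\<lambda>S. S \<union> {i}) ` Pow (UNIV - {i}) = {T. T \<in> UNIV \<and> i \<in> T}"
      proof
        show "{T. T \<in> UNIV \<and> i \<in> T} \<subseteq> (\<lambda>S. S \<union> {i}) ` Pow (UNIV - {i})"
        proof
          fix T :: "'a set" assume "T \<in> {T. T \<in> UNIV \<and> i \<in> T}"
          then have "T = (T - {i}) \<union> {i}" by auto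
          then show "T \<in> (\<lambda>S. S \<union> {i}) ` Pow (UNIV - {i})" by blast
        qed
      qed auto
      have "(\<Sum>T\<in>{T. T \<in> UNIV \<and> i \<in> T}. ?c (card T - 1) * u T)
          = (\<Sum>S\<in>Pow (UNIV - {i}). ?c (card (S \<union> {i}) - 1) * u (S \<union> {i}))"
        by (simp only: img[symmetric] sum.reindex[OF inj] o_def)
      also have "\<dots> = (\<Sum>S\<in>Pow (UNIV - {i}). ?c (card S) * u (S \<union> {i}))"
      proof (rule sum.cong[OF refl])
        fix S assume "S \<in> Pow (UNIV - {i})"
        then have "i \<notin> S" by auto
        then have "card (S \<union> {i}) = Suc (card S)" by simp
        then show "?c (card (S \<union> {i}) - 1) * u (S \<union> {i}) = ?c (card S) * u (S \<union> {i})" by simp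
      qed
      finally show ?thesis by simp
    qed
    have "(\<Sum>i\<in>UNIV. \<Sum>S\<in>Pow (UNIV - {i}). ?c (card S) * u (S \<union> {i}))
        = (\<Sum>i\<in>UNIV. \<Sum>T\<in>{T. T \<in> UNIV \<and> i \<in> T}. ?c (card T - 1) * u T)"
      by (simp only: inner)
    also have "\<dots> = (\<Sum>T\<in>UNIV. \<Sum>i\<in>{i. i \<in> UNIV \<and> i \<in> T}. ?c (card T - 1) * u T)"
      by (rule sum.swap_restrict) auto
    also have "\<dots> = (\<Sum>T\<in>UNIV. real (card T) * ?c (card T - 1) * u T)"
      by (rule sum.cong[OF refl]) simp
    finally show ?thesis .
  qed
  have "(\<Sum>i\<in>UNIV. sh u i)
      = (\<Sum>i\<in>UNIV. \<Sum>S\<in>Pow (UNIV - {i}). ?c (card S) * u (S \<union> {i}))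
        - (\<Sum>i\<in>UNIV. \<Sum>S\<in>Pow (UNIV - {i}). ?c (card S) * u S)"
    unfolding sh_def by (simp add: sum_subtractf right_diff_distrib)
  also have "\<dots> = (\<Sum>T\<in>UNIV. (real (card T) * ?c (card T - 1) - real (?n - card T) * ?c (card T)) * u T)"
    unfolding A B by (simp add: sum_subtractf left_diff_distrib)
  also have "\<dots> = (\<Sum>T\<in>UNIV. ((if T = UNIV then 1 else 0) - (if T = {} then 1 else 0)) * u T)"
  proof (rule sum.cong[OF refl])
    fix T :: "'a set"
    have le: "card T \<le> ?n" by (simp add: card_mono)
    have e1: "(card T = ?n) = (T = UNIV)" using card_subset_eq[of UNIV T] by auto
    have e2: "(card T = 0) = (T = {})" by simp
    show "(real (card T) * ?c (card T - 1) - real (?n - card T) * ?c (card T)) * u T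
        = ((if T = UNIV then 1 else 0) - (if T = {} then 1 else 0)) * u T"
      using coef[OF le n0] e1 e2 by simp
  qed
  also have "\<dots> = (\<Sum>T\<in>UNIV. (if T = UNIV then u T else 0) - (if T = {} then u T else 0))"
    by (rule sum.cong[OF refl]) simp
  also have "\<dots> = u UNIV - u {}"
    by (simp only: sum_subtractf sum.delta finite) simp
  finally show ?thesis .
qed


definition bcK :: "('a::finite set \<Rightarrow> real) \<Rightarrow> 'a \<Rightarrow> 'a \<Rightarrow> real" where
  "bcK u i j = (\<Sum>T\<in>Pow (UNIV - {i, j}). cf (card (UNIV :: 'a set)) (Suc (card T)) *
      (u (insert i (insert j T)) - u (insert j T) - u (insert i T) + u T))"

lemma bcK_sym: "bcK u i j = bcK u j i"
  unfolding bcK_def by (simp add: insert_commute algebra_simps)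

lemma sh_diff:
  assumes ij: "i \<noteq> j"
  shows "sh u i - sh (\<lambda>S. u (S - {j})) i = bcK u i j"
proof -
  let ?c = "cf (card (UNIV :: 'a set))"
  let ?f = "\<lambda>S. ?c (card S) * (u (S \<union> {i}) - u S - (u (S \<union> {i} - {j}) - u (S - {j})))"
  have "sh u i - sh (\<lambda>S. u (S - {j})) i = (\<Sum>S\<in>Pow (UNIV - {i}). ?f S)"
    unfolding sh_def by (simp add: sum_subtractf right_diff_distrib)
  also have "\<dots> = (\<Sum>S\<in>{S \<in> Pow (UNIV - {i}). j \<in> S}. ?f S)"
  proof (rule sum.mono_neutral_right)
    show "\<forall>S\<in>Pow (UNIV - {i}) - {S \<in> Pow (UNIV - {i}). j \<in> S}. ?f S = 0"
    proof
      fix S assume "S \<in> Pow (UNIV - {i}) - {S \<in> Pow (UNIV - {i}). j \<in> S}"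
      then have "j \<notin> S" by blast
      then have "S \<union> {i} - {j} = S \<union> {i}" "S - {j} = S" using ij by auto
      then show "?f S = 0" by simp
    qed
  qed auto
  also have "\<dots> = (\<Sum>T\<in>Pow (UNIV - {i, j}). ?f (insert j T))"
  proof -
    have inj: "inj_on (insert j) (Pow (UNIV - {i, j}))"
    proof (rule inj_onI)
      fix A B assume AB: "A \<in> Pow (UNIV - {i, j})" "B \<in> Pow (UNIV - {i, j})" "insert j A = insert j B"
      then have "j \<notin> A" "j \<notin> B" by auto
      then have "A = insert j A - {j}" "B = insert j B - {j}" by auto
      then show "A = B" using AB(3) by simp
    qed
    have img: "insert j ` Pow (UNIV - {i, j}) = {S \<in> Pow (UNIV - {i}). j \<in> S}"
    proof
      show "{S \<in> Pow (UNIV - {i}). j \<in> S} \<subseteq> insert j ` Pow (UNIV - {i, j})"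
      proof
        fix S assume S: "S \<in> {S \<in> Pow (UNIV - {i}). j \<in> S}"
        then have "S = insert j (S - {j})" "S - {j} \<in> Pow (UNIV - {i, j})" by auto
        then show "S \<in> insert j ` Pow (UNIV - {i, j})" by blast
      qed
    qed (use ij in auto)
    show ?thesis by (simp only: img[symmetric] sum.reindex[OF inj] o_def)
  qed
  also have "\<dots> = bcK u i j"
    unfolding bcK_def
  proof (rule sum.cong[OF refl])
    fix T assume "T \<in> Pow (UNIV - {i, j})"
    then have T: "i \<notin> T" "j \<notin> T" by auto
    have "card (insert j T) = Suc (card T)" using T by simp
    moreover have "insert j T \<union> {i} = insert i (insert j T)" by auto
    moreover have "insert j T \<union> {i} - {j} = insert i T" using T ij by auto
    moreover have "insert j T - {j} = T" using T by auto
    ultimately show "?f (insert j T) = ?c (Suc (card T)) *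
      (u (insert i (insert j T)) - u (insert j T) - u (insert i T) + u T)"
      by (simp add: algebra_simps)
  qed
  finally show ?thesis .
qed

lemma sh_bc:
  assumes "i \<noteq> j"
  shows "sh u i - sh (\<lambda>S. u (S - {j})) i = sh u j - sh (\<lambda>S. u (S - {i})) j"
  using sh_diff[OF assms] sh_diff[of j i u] assms bcK_sym by metis


lemma supp_sub: "is_prob \<rho> \<Longrightarrow> supp \<rho> \<subseteq> Pow gN"
  unfolding is_prob_def supp_def by force

lemma extent_sub: "is_prob \<rho> \<Longrightarrow> extent \<rho> \<subseteq> gN"
  using supp_sub unfolding extent_def by blast

lemma supp_extent: "g \<in> supp \<rho> \<Longrightarrow> g \<subseteq> extent \<rho>"
  unfolding extent_def by blast

lemma rho_nonneg: "is_prob \<rho> \<Longrightarrow> 0 \<le> \<rho> g"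
  unfolding is_prob_def by blast

lemma rho_supp: "is_prob \<rho> \<Longrightarrow> \<rho> g \<noteq> 0 \<Longrightarrow> g \<in> supp \<rho>"
  using rho_nonneg[of \<rho> g] unfolding supp_def by simp

lemma EMV_isolated:
  fixes \<rho> :: "'a::finite set set \<Rightarrow> real"
  assumes "is_prob \<rho>" "i \<in> isolated (extent \<rho>)"
  shows "EMV v \<rho> i = 0"
  unfolding EMV_def
proof (rule sum.neutral, rule ballI)
  fix g :: "'a set set" assume g: "g \<in> Pow gN"
  show "\<rho> g * myerson v g i = 0"
  proof (cases "\<rho> g = 0")
    case False
    then have "g \<subseteq> extent \<rho>" using rho_supp[OF assms(1)] supp_extent by blast
    moreover have "i \<notin> players (extent \<rho>)" using assms(2) unfolding isolated_def by simp
    ultimately have ni: "i \<notin> players g" using players_mono by blast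
    have gs: "g \<subseteq> gN" using g by simp
    have eqr: "restr g (S \<union> {i}) = restr g S" for S using restr_null[OF gs ni] .
    have "myerson v g i = 0" unfolding myerson_sh by (rule sh_null) (simp only: eqr)
    then show ?thesis by simp
  qed simp
qed

lemma EMV_alloc: "alloc_rule EMV"
  unfolding alloc_rule_def using EMV_isolated by blast

lemma myerson_comp:
  fixes g h :: "'a::finite set set"
  assumes v: "comp_additive v" "is_game v" and g: "g \<subseteq> gN"
    and hyp: "\<And>l x. l \<in> g \<Longrightarrow> x \<in> l \<Longrightarrow> x \<in> players h \<Longrightarrow> l \<in> h"
  shows "(\<Sum>i\<in>players h. myerson v g i) = v (g \<inter> h)"
proof -
  define u1 where "u1 S = v (restr g S \<inter> h)" for S
  define u2 where "u2 S = v (restr g S - h)" for S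
  have split: "v (restr g S) = u1 S + u2 S" for S
  proof -
    let ?A = "restr g S \<inter> h" and ?B = "restr g S - h"
    have AB: "?A \<subseteq> gN" "?B \<subseteq> gN" using g restr_subset by blast+
    have "players ?A \<inter> players ?B = {}"
    proof (rule ccontr)
      assume "players ?A \<inter> players ?B \<noteq> {}"
      then obtain x where x: "x \<in> players ?A" "x \<in> players ?B" by blast
      then obtain y where y: "y \<noteq> x" "{x,y} \<in> ?B" unfolding players_iff by blast
      have "x \<in> players h" using x(1) players_mono[of ?A h] by blast
      moreover have "{x,y} \<in> g" using y restr_subset by blast
      ultimately have "{x,y} \<in> h" using hyp by blast
      then show False using y by blast
    qed
    moreover have "?A \<union> ?B = restr g S" by blast
    ultimately show ?thesis using v_union[OF v(1) AB] unfolding u1_def u2_def by simp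
  qed
  have msum: "myerson v g i = sh u1 i + sh u2 i" for i
    unfolding myerson_sh split by (rule sh_add)
  have z2: "sh u2 i = 0" if i: "i \<in> players h" for i
  proof -
    have eq: "restr g S - h = restr (g - h) S" for S unfolding restr_def by blast
    have "i \<notin> players (g - h)"
    proof
      assume "i \<in> players (g - h)"
      then obtain y where "y \<noteq> i" "{i,y} \<in> g - h" unfolding players_iff by blast
      then show False using hyp[of "{i,y}" i] i by blast
    qed
    moreover have "g - h \<subseteq> gN" using g by blast
    ultimately have eqr: "restr (g - h) (S \<union> {i}) = restr (g - h) S" for S using restr_null by metis
    show ?thesis unfolding u2_def eq by (rule sh_null) (simp only: eqr)
  qed
  have z1: "sh u1 i = 0" if i: "i \<notin> players h" for i
  proof -
    have eq: "restr g S \<inter> h = restr (g \<inter> h) S" for S unfolding restr_def by blast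
    have "i \<notin> players (g \<inter> h)" using i players_mono[of "g \<inter> h" h] by blast
    moreover have "g \<inter> h \<subseteq> gN" using g by blast
    ultimately have eqr: "restr (g \<inter> h) (S \<union> {i}) = restr (g \<inter> h) S" for S using restr_null by metis
    show ?thesis unfolding u1_def eq by (rule sh_null) (simp only: eqr)
  qed
  have "(\<Sum>i\<in>players h. myerson v g i) = (\<Sum>i\<in>players h. sh u1 i)"
    unfolding msum using z2 by simp
  also have "\<dots> = (\<Sum>i\<in>UNIV. sh u1 i)"
    by (rule sum.mono_neutral_left) (use z1 in auto)
  also have "\<dots> = u1 UNIV - u1 {}" by (rule sh_eff)
  also have "\<dots> = v (g \<inter> h)"
    unfolding u1_def using restr_UNIV[OF g] restr_empty[OF g] v(2) unfolding is_game_def by simp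
  finally show ?thesis .
qed

lemma EMV_CB:
  fixes \<rho> :: "'a::finite set set \<Rightarrow> real"
  assumes D: "(v, \<rho>) \<in> domD"
  shows "comp_balanced EMV v \<rho>"
  unfolding comp_balanced_def
proof
  fix h assume h: "h \<in> comps (extent \<rho>)"
  have v: "comp_additive v" "is_game v" and p: "is_prob \<rho>" using D unfolding domD_def by auto
  have hmax: "\<forall>i\<in>players h. \<forall>j. j \<noteq> i \<and> {i, j} \<in> extent \<rho> \<longrightarrow> {i, j} \<in> h"
    using h unfolding comps_def is_component_def by blast
  have "(\<Sum>i\<in>players h. EMV v \<rho> i) = (\<Sum>g\<in>Pow gN. \<rho> g * (\<Sum>i\<in>players h. myerson v g i))"
    unfolding EMV_def by (simp add: sum_distrib_left sum.swap[of _ "players h"])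
  also have "\<dots> = (\<Sum>g\<in>Pow gN. \<rho> g * v (g \<inter> h))"
  proof (rule sum.cong[OF refl])
    fix g :: "'a set set" assume g: "g \<in> Pow gN"
    show "\<rho> g * (\<Sum>i\<in>players h. myerson v g i) = \<rho> g * v (g \<inter> h)"
    proof (cases "\<rho> g = 0")
      case False
      then have ge: "g \<subseteq> extent \<rho>" using rho_supp[OF p] supp_extent by blast
      have "(\<Sum>i\<in>players h. myerson v g i) = v (g \<inter> h)"
      proof (rule myerson_comp[OF v])
        show "g \<subseteq> gN" using g by blast
        fix l x assume l: "l \<in> g" "x \<in> l" "x \<in> players h"
        obtain a b where ab: "a \<noteq> b" "l = {a,b}" using l(1) g gN_E by blast
        obtain y where y: "y \<noteq> x" "l = {x,y}"
        proof (cases "x = a")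
          case True show ?thesis by (rule that[of b]) (use ab True in auto)
        next
          case False then have "x = b" using l(2) ab by blast
          show ?thesis by (rule that[of a]) (use ab \<open>x = b\<close> in auto)
        qed
        then show "l \<in> h" using hmax l(3) l(1) ge by blast
      qed
      then show ?thesis by simp
    qed simp
  qed
  also have "\<dots> = (\<Sum>g\<in>supp \<rho>. \<rho> g * v (g \<inter> h))"
  proof (rule sum.mono_neutral_right)
    show "finite (Pow gN :: 'a set set set)" using finite_gN by blast
    show "supp \<rho> \<subseteq> Pow gN" using supp_sub[OF p] .
    show "\<forall>g\<in>Pow gN - supp \<rho>. \<rho> g * v (g \<inter> h) = 0" using rho_supp[OF p] by (metis DiffD2 mult_eq_0_iff)
  qed
  finally show "(\<Sum>i\<in>players h. EMV v \<rho> i) = (\<Sum>g\<in>supp \<rho>. \<rho> g * v (g \<inter> h))" .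
qed


lemma finite_PowgN: "finite (Pow (gN :: 'a::finite set set))"
  using finite_gN by blast

lemma restr_prob_reindex:
  fixes \<rho> :: "'a::finite set set \<Rightarrow> real"
  assumes G: "G \<subseteq> gN"
  shows "(\<Sum>g\<in>Pow gN. restr_prob \<rho> G g * F g) = (\<Sum>f\<in>Pow gN. \<rho> f * F (f \<inter> G))"
proof -
  have fG: "finite G" using G finite_gN finite_subset by blast
  have fD: "finite (gN - G)" using finite_gN by blast
  have "(\<Sum>g\<in>Pow gN. restr_prob \<rho> G g * F g) = (\<Sum>g\<in>Pow G. restr_prob \<rho> G g * F g)"
  proof (rule sum.mono_neutral_right)
    show "\<forall>g\<in>Pow gN - Pow G. restr_prob \<rho> G g * F g = 0"
      unfolding restr_prob_def by auto
  qed (use finite_PowgN G in auto)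
  also have "\<dots> = (\<Sum>g\<in>Pow G. \<Sum>h'\<in>Pow (gN - G). \<rho> (g \<union> h') * F g)"
    by (rule sum.cong[OF refl]) (simp add: restr_prob_def sum_distrib_right)
  also have "\<dots> = (\<Sum>(g, h')\<in>Pow G \<times> Pow (gN - G). \<rho> (g \<union> h') * F ((g \<union> h') \<inter> G))"
  proof -
    have "(\<Sum>g\<in>Pow G. \<Sum>h'\<in>Pow (gN - G). \<rho> (g \<union> h') * F g)
        = (\<Sum>g\<in>Pow G. \<Sum>h'\<in>Pow (gN - G). \<rho> (g \<union> h') * F ((g \<union> h') \<inter> G))"
    proof (intro sum.cong refl)
      fix g h' assume "g \<in> Pow G" "h' \<in> Pow (gN - G)"
      then have "(g \<union> h') \<inter> G = g" by auto
      then show "\<rho> (g \<union> h') * F g = \<rho> (g \<union> h') * F ((g \<union> h') \<inter> G)" by simp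
    qed
    then show ?thesis by (simp add: sum.cartesian_product)
  qed
  also have "\<dots> = (\<Sum>f\<in>(\<lambda>(g, h'). g \<union> h') ` (Pow G \<times> Pow (gN - G)). \<rho> f * F (f \<inter> G))"
  proof -
    have inj: "inj_on (\<lambda>(g, h'). g \<union> h') (Pow G \<times> Pow (gN - G))"
    proof (rule inj_onI, clarify)
      fix a b c d assume abcd: "a \<subseteq> G" "b \<subseteq> gN - G" "c \<subseteq> G" "d \<subseteq> gN - G" "a \<union> b = c \<union> d"
      have "a = (a \<union> b) \<inter> G" "c = (c \<union> d) \<inter> G" using abcd by auto
      moreover have "b = (a \<union> b) - G" "d = (c \<union> d) - G" using abcd by auto
      ultimately show "a = c \<and> b = d" using abcd(5) by metis
    qed
    show ?thesis by (subst sum.reindex[OF inj]) (simp add: split_def)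
  qed
  also have "(\<lambda>(g, h'). g \<union> h') ` (Pow G \<times> Pow (gN - G)) = Pow gN"
  proof
    show "Pow gN \<subseteq> (\<lambda>(g, h'). g \<union> h') ` (Pow G \<times> Pow (gN - G))"
    proof
      fix f :: "'a set set" assume "f \<in> Pow gN"
      then have "f = (\<lambda>(g, h'). g \<union> h') (f \<inter> G, f - G)" "(f \<inter> G, f - G) \<in> Pow G \<times> Pow (gN - G)"
        by auto
      then show "f \<in> (\<lambda>(g, h'). g \<union> h') ` (Pow G \<times> Pow (gN - G))" by blast
    qed
  qed (use G in auto)
  finally show ?thesis .
qed

lemma EMV_minus:
  fixes \<rho> :: "'a::finite set set \<Rightarrow> real"
  shows "EMV v (minus_player \<rho> j) i
    = (\<Sum>f\<in>Pow gN. \<rho> f * sh (\<lambda>S. v (restr f (S - {j}))) i)"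
proof -
  have G: "gN - links_of gN j \<subseteq> gN" by blast
  have "EMV v (minus_player \<rho> j) i = (\<Sum>f\<in>Pow gN. \<rho> f * myerson v (f \<inter> (gN - links_of gN j)) i)"
    unfolding EMV_def minus_player_def by (rule restr_prob_reindex[OF G])
  also have "\<dots> = (\<Sum>f\<in>Pow gN. \<rho> f * sh (\<lambda>S. v (restr f (S - {j}))) i)"
  proof (rule sum.cong[OF refl])
    fix f :: "'a set set" assume "f \<in> Pow gN"
    then have "f \<subseteq> gN" by simp
    then show "\<rho> f * myerson v (f \<inter> (gN - links_of gN j)) i = \<rho> f * sh (\<lambda>S. v (restr f (S - {j}))) i"
      unfolding myerson_sh by (simp only: restr_minus_links)
  qed
  finally show ?thesis by simp
qed

lemma EMV_BC:
  fixes \<rho> :: "'a::finite set set \<Rightarrow> real"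
  shows "bal_contrib EMV v \<rho>"
  unfolding bal_contrib_def
proof (intro allI impI)
  fix i j :: 'a assume ij: "i \<noteq> j"
  have e: "EMV v \<rho> k - EMV v (minus_player \<rho> l) k
      = (\<Sum>f\<in>Pow gN. \<rho> f * (sh (\<lambda>S. v (restr f S)) k - sh (\<lambda>S. v (restr f (S - {l}))) k))" for k l
    unfolding EMV_minus by (simp add: EMV_def myerson_sh sum_subtractf right_diff_distrib)
  show "EMV v \<rho> i - EMV v (minus_player \<rho> j) i = EMV v \<rho> j - EMV v (minus_player \<rho> i) j"
    unfolding e
  proof (rule sum.cong[OF refl])
    fix f :: "'a set set"
    show "\<rho> f * (sh (\<lambda>S. v (restr f S)) i - sh (\<lambda>S. v (restr f (S - {j}))) i)
        = \<rho> f * (sh (\<lambda>S. v (restr f S)) j - sh (\<lambda>S. v (restr f (S - {i}))) j)"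
      using sh_bc[OF ij, of "\<lambda>S. v (restr f S)"] by simp
  qed
qed


lemma restr_prob_nonneg: "is_prob \<rho> \<Longrightarrow> 0 \<le> restr_prob \<rho> G h"
  unfolding restr_prob_def by (auto intro!: sum_nonneg simp: rho_nonneg)

lemma is_prob_restr:
  fixes \<rho> :: "'a::finite set set \<Rightarrow> real"
  assumes p: "is_prob \<rho>" and G: "G \<subseteq> gN"
  shows "is_prob (restr_prob \<rho> G)"
proof -
  have tot: "(\<Sum>f\<in>Pow gN. \<rho> f) = 1" using p unfolding is_prob_def by blast
  have out: "restr_prob \<rho> G h = 0" if "\<not> h \<subseteq> gN" for h
    using that G unfolding restr_prob_def by auto
  have le1: "restr_prob \<rho> G h \<le> 1" for h
  proof (cases "h \<subseteq> gN")
    case True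
    have "restr_prob \<rho> G h = (\<Sum>g\<in>Pow gN. if g = h then restr_prob \<rho> G g else 0)"
      using True by (simp add: sum.delta[OF finite_PowgN])
    also have "\<dots> = (\<Sum>g\<in>Pow gN. restr_prob \<rho> G g * (if g = h then 1 else 0))"
      by (rule sum.cong) auto
    also have "\<dots> = (\<Sum>f\<in>Pow gN. \<rho> f * (if f \<inter> G = h then 1 else 0))"
      by (rule restr_prob_reindex[OF G])
    also have "\<dots> \<le> (\<Sum>f\<in>Pow gN. \<rho> f)"
      by (rule sum_mono) (simp add: rho_nonneg[OF p])
    finally show ?thesis using tot by simp
  next
    case False then show ?thesis using out by simp
  qed
  have s1: "(\<Sum>g\<in>Pow gN. restr_prob \<rho> G g) = 1"
    using restr_prob_reindex[OF G, of \<rho> "\<lambda>_. 1"] tot by simp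
  show ?thesis unfolding is_prob_def
    using restr_prob_nonneg[OF p] le1 out s1 by blast
qed

lemma extent_restr:
  fixes \<rho> :: "'a::finite set set \<Rightarrow> real"
  assumes p: "is_prob \<rho>"
  shows "extent (restr_prob \<rho> G) \<subseteq> extent \<rho> \<inter> G"
proof
  fix l assume "l \<in> extent (restr_prob \<rho> G)"
  then obtain h where h: "restr_prob \<rho> G h > 0" "l \<in> h" unfolding extent_def supp_def by blast
  have hG: "h \<subseteq> G"
  proof (rule ccontr)
    assume "\<not> h \<subseteq> G" then have "restr_prob \<rho> G h = 0" unfolding restr_prob_def by simp
    then show False using h by simp
  qed
  then have pos: "(\<Sum>h'\<in>Pow (gN - G). \<rho> (h \<union> h')) > 0" using h unfolding restr_prob_def by simp
  obtain h' where "\<rho> (h \<union> h') > 0"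
  proof (rule ccontr)
    assume "\<not> thesis"
    then have "\<forall>h'. \<rho> (h \<union> h') \<le> 0" using that by (meson not_le)
    then have "(\<Sum>h'\<in>Pow (gN - G). \<rho> (h \<union> h')) \<le> 0" by (simp add: sum_nonpos)
    then show False using pos by simp
  qed
  then have "h \<union> h' \<in> supp \<rho>" unfolding supp_def by simp
  then have "l \<in> extent \<rho>" using h(2) unfolding extent_def by blast
  then show "l \<in> extent \<rho> \<inter> G" using hG h(2) by blast
qed

lemma card_minus:
  fixes \<rho> :: "'a::finite set set \<Rightarrow> real"
  assumes p: "is_prob \<rho>" and j: "j \<in> players (extent \<rho>)"
  shows "card (extent (minus_player \<rho> j)) < card (extent \<rho>)"
proof -
  obtain k where k: "k \<noteq> j" "{j,k} \<in> extent \<rho>" using j unfolding players_iff by blast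
  have "{j,k} \<in> gN" using k unfolding gN_def by blast
  then have "{j,k} \<in> links_of gN j" using k unfolding links_of_def by blast
  then have "extent (minus_player \<rho> j) \<subseteq> extent \<rho> - {{j,k}}"
    using extent_restr[OF p, of "gN - links_of gN j"] unfolding minus_player_def by blast
  also have "\<dots> \<subset> extent \<rho>" using k by blast
  finally have "extent (minus_player \<rho> j) \<subset> extent \<rho>" .
  moreover have "finite (extent \<rho>)" using extent_sub[OF p] finite_gN finite_subset by blast
  ultimately show ?thesis by (rule psubset_card_mono[rotated])
qed

lemma adj_sym: "(x, y) \<in> adj h \<Longrightarrow> (y, x) \<in> adj h"
  unfolding adj_def by (auto simp: insert_commute)

lemma rtrancl_adj_sym: "(x, y) \<in> (adj h)\<^sup>* \<Longrightarrow> (y, x) \<in> (adj h)\<^sup>*"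
proof (induction rule: rtrancl_induct)
  case base then show ?case by simp
next
  case (step y z)
  then show ?case using adj_sym converse_rtrancl_into_rtrancl by metis
qed

lemma comp_exists:
  fixes E :: "'a set set"
  assumes E: "E \<subseteq> gN" and i: "i \<in> players E"
  shows "\<exists>h\<in>comps E. i \<in> players h"
proof -
  define h where "h = {l \<in> E. \<exists>a\<in>l. (i, a) \<in> (adj E)\<^sup>*}"
  have R: "(i, x) \<in> (adj h)\<^sup>*" if "(i, x) \<in> (adj E)\<^sup>*" for x
    using that
  proof (induction rule: rtrancl_induct)
    case base then show ?case by simp
  next
    case (step y z)
    then have "y \<noteq> z" "{y,z} \<in> E" unfolding adj_def by auto
    moreover have "y \<in> {y,z}" by simp
    ultimately have "{y,z} \<in> h" using step(1) unfolding h_def by blast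
    then have "(y, z) \<in> adj h" using \<open>y \<noteq> z\<close> unfolding adj_def by simp
    with step(3) show ?case by (rule rtrancl_into_rtrancl)
  qed
  have P: "(i, p) \<in> (adj E)\<^sup>*" if pp: "p \<in> players h" for p
  proof -
    obtain q where q: "q \<noteq> p" "{p,q} \<in> h" using pp unfolding players_iff by blast
    then obtain a where a: "a \<in> {p,q}" "(i, a) \<in> (adj E)\<^sup>*" "{p,q} \<in> E" unfolding h_def by blast
    show ?thesis
    proof (cases "a = p")
      case True then show ?thesis using a by simp
    next
      case False
      then have "a = q" using a(1) by blast
      have "{q,p} \<in> E" using a(3) by (simp add: insert_commute)
      then have "(q, p) \<in> adj E" using q(1) unfolding adj_def by simp
      then show ?thesis using a(2) \<open>a = q\<close> by (simp add: rtrancl_into_rtrancl)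
    qed
  qed
  obtain k where k: "k \<noteq> i" "{i,k} \<in> E" using i unfolding players_iff by blast
  have ik: "{i,k} \<in> h" unfolding h_def using k by blast
  have ih: "i \<in> players h" using players_I[of i k h] k(1) ik by blast
  have "h \<noteq> {}" using ik by blast
  moreover have "h \<subseteq> E" unfolding h_def by blast
  moreover have "net_connected h"
    unfolding net_connected_def
  proof (intro ballI)
    fix p q assume "p \<in> players h" "q \<in> players h"
    then have "(i, p) \<in> (adj h)\<^sup>*" "(i, q) \<in> (adj h)\<^sup>*" using P R by blast+
    then show "(p, q) \<in> (adj h)\<^sup>*" using rtrancl_adj_sym rtrancl_trans by metis
  qed
  moreover have "\<forall>p\<in>players h. \<forall>q. q \<noteq> p \<and> {p, q} \<in> E \<longrightarrow> {p, q} \<in> h"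
  proof (intro ballI allI impI)
    fix p q assume "p \<in> players h" "q \<noteq> p \<and> {p, q} \<in> E"
    then have "(i, p) \<in> (adj E)\<^sup>*" "{p,q} \<in> E" using P by blast+
    then show "{p,q} \<in> h" unfolding h_def by blast
  qed
  ultimately have "h \<in> comps E" unfolding comps_def is_component_def by blast
  then show ?thesis using ih by blast
qed


lemma uniq:
  fixes \<Psi> :: "'a::finite alloc"
  assumes ar: "alloc_rule \<Psi>" and ax: "\<forall>(v, \<rho>)\<in>domD. comp_balanced \<Psi> v \<rho> \<and> bal_contrib \<Psi> v \<rho>"
  shows "(v, \<rho>) \<in> domD \<Longrightarrow> \<Psi> v \<rho> = EMV v \<rho>"
proof (induction "card (extent \<rho>)" arbitrary: \<rho> rule: less_induct)
  case less
  have p: "is_prob \<rho>" and gv: "is_game v" "comp_additive v" using less.prems unfolding domD_def by auto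
  have Dm: "(v, minus_player \<rho> j) \<in> domD" for j
  proof -
    have "gN - links_of gN j \<subseteq> gN" by blast
    then show ?thesis using is_prob_restr[OF p] gv unfolding domD_def minus_player_def by auto
  qed
  have IH: "\<Psi> v (minus_player \<rho> j) = EMV v (minus_player \<rho> j)" if "j \<in> players (extent \<rho>)" for j
    using less.hyps[OF card_minus[OF p that] Dm] .
  have cbP: "comp_balanced \<Psi> v \<rho>" and bcP: "bal_contrib \<Psi> v \<rho>" using ax less.prems by auto
  have cbE: "comp_balanced EMV v \<rho>" using EMV_CB[OF less.prems] .
  have bcE: "bal_contrib EMV v \<rho>" by (rule EMV_BC)
  show ?case
  proof
    fix i
    show "\<Psi> v \<rho> i = EMV v \<rho> i"
    proof (cases "i \<in> players (extent \<rho>)")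
      case False
      then have iso: "i \<in> isolated (extent \<rho>)" unfolding isolated_def by simp
      then have "\<Psi> v \<rho> i = 0" using ar p gv unfolding alloc_rule_def by blast
      moreover have "EMV v \<rho> i = 0" using EMV_isolated[OF p iso] .
      ultimately show ?thesis by simp
    next
      case True
      obtain h where h: "h \<in> comps (extent \<rho>)" "i \<in> players h"
        using comp_exists[OF extent_sub[OF p] True] by blast
      have hp: "players h \<subseteq> players (extent \<rho>)" using players_mono comps_sub h(1) by blast
      define d where "d k = \<Psi> v \<rho> k - EMV v \<rho> k" for k
      have const: "d j = d i" if j: "j \<in> players h" for j
      proof (cases "j = i")
        case False
        have "\<Psi> v \<rho> i - \<Psi> v (minus_player \<rho> j) i = \<Psi> v \<rho> j - \<Psi> v (minus_player \<rho> i) j"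
          using bcP False unfolding bal_contrib_def by metis
        moreover have "EMV v \<rho> i - EMV v (minus_player \<rho> j) i = EMV v \<rho> j - EMV v (minus_player \<rho> i) j"
          using bcE False unfolding bal_contrib_def by metis
        moreover have "\<Psi> v (minus_player \<rho> j) = EMV v (minus_player \<rho> j)" using IH j hp by blast
        moreover have "\<Psi> v (minus_player \<rho> i) = EMV v (minus_player \<rho> i)" using IH h(2) hp by blast
        ultimately show ?thesis unfolding d_def by simp
      qed simp
      have "(\<Sum>k\<in>players h. d k) = 0"
        using cbP cbE h(1) unfolding comp_balanced_def d_def by (simp add: sum_subtractf)
      moreover have "(\<Sum>k\<in>players h. d k) = real (card (players h)) * d i" using const by simp
      moreover have "card (players h) > 0" using h(2) by (auto simp: card_gt_0_iff)
      ultimately have "d i = 0" using h(2) by auto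
      then show ?thesis unfolding d_def by simp
    qed
  qed
qed

theorem mainTheorem2:
  shows "(alloc_rule (EMV :: 'a::finite alloc) \<and>
           (\<forall>(v, \<rho>)\<in>(domD :: (('a set set \<Rightarrow> real) \<times> ('a set set \<Rightarrow> real)) set).
              comp_balanced EMV v \<rho> \<and> bal_contrib EMV v \<rho>))
       \<and> (\<forall>\<Psi> :: 'a alloc. alloc_rule \<Psi> \<and>
              (\<forall>(v, \<rho>)\<in>domD. comp_balanced \<Psi> v \<rho> \<and> bal_contrib \<Psi> v \<rho>)
            \<longrightarrow> (\<forall>(v, \<rho>)\<in>domD. \<Psi> v \<rho> = EMV v \<rho>))"
proof (intro conjI allI impI)
  show "alloc_rule (EMV :: 'a::finite alloc)" by (rule EMV_alloc)
  show "\<forall>(v, \<rho>)\<in>(domD :: (('a set set \<Rightarrow> real) \<times> ('a set set \<Rightarrow> real)) set).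
              comp_balanced EMV v \<rho> \<and> bal_contrib EMV v \<rho>"
    using EMV_CB EMV_BC by blast
  fix \<Psi> :: "'a alloc"
  assume "alloc_rule \<Psi> \<and> (\<forall>(v, \<rho>)\<in>domD. comp_balanced \<Psi> v \<rho> \<and> bal_contrib \<Psi> v \<rho>)"
  then show "\<forall>(v, \<rho>)\<in>domD. \<Psi> v \<rho> = EMV v \<rho>" using uniq by blast
qed

end
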